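(* Let $\mathcal{G}$ be the ladder graph. For every $\overline p\in(2,\infty)$ and every $\lambda>0$, $\lim_{p\to\overline p}\mathcal J_{p,\mathcal{G}}(\lambda)=\mathcal J_{\overline p,\mathcal{G}}(\lambda)$.
   Context: The ladder graph is the metric graph embedded in $\mathbb{R}^2$ with vertices $(k,0),(k,1)$, $k\in\mathbb{Z}$, and edges $[k,k+1]\times\{0\}$, $[k,k+1]\times\{1\}$, $\{k\}\times[0,1]$, all of length 1. $H^1(\mathcal{G})$: continuous functions, $H^1$ on each edge. For $p>2$, $\lambda\in\mathbb{R}$: $J_{p,\lambda}(v,\mathcal{G})=\frac12\|v'\|_2^2+\frac\lambda2\|v\|_2^2-\frac1p\|v\|_p^p$; $\mathcal N_{p,\lambda}(\mathcal{G})=\{v\in H^1(\mathcal{G})\setminus\{0\}:\|v'\|_2^2+\lambda\|v\|_2^2=\|v\|_p^p\}$; $\mathcal J_{p,\mathcal{G}}(\lambda)=\inf_{\mathcal N_{p,\lambda}(\mathcal{G})}J_{p,\lambda}(\cdot,\mathcal{G})$. *)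

theory Defs
  imports "HOL-Analysis.Analysis"
begin

datatype ladder_edge = Bot int | Top int | Rung int

fun edge_path :: "ladder_edge \<Rightarrow> real \<Rightarrow> real \<times> real" where
  "edge_path (Bot k) t = (of_int k + t, 0)"
| "edge_path (Top k) t = (of_int k + t, 1)"
| "edge_path (Rung k) t = (of_int k, t)"

definition ladder :: "(real \<times> real) set" where
  "ladder = (\<Union>e. edge_path e ` {0..1})"

definition is_weak_deriv01 :: "(real \<Rightarrow> real) \<Rightarrow> (real \<Rightarrow> real) \<Rightarrow> bool" where
  "is_weak_deriv01 f g \<longleftrightarrow>
     set_integrable lborel {0..1} g \<and>
     set_integrable lborel {0..1} (\<lambda>t. (g t)\<^sup>2) \<and>
     (\<forall>t\<in>{0..1}. f t = f 0 + (LBINT s=0..t. g s))"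

definition H1_01 :: "(real \<Rightarrow> real) \<Rightarrow> bool" where
  "H1_01 f \<longleftrightarrow> (\<exists>g. is_weak_deriv01 f g)"

definition deriv01 :: "(real \<Rightarrow> real) \<Rightarrow> real \<Rightarrow> real" where
  "deriv01 f = (SOME g. is_weak_deriv01 f g)"

text \<open>Functions on the ladder are represented as functions on the plane; only
  their values on the ladder matter. Continuity at vertices is automatic.\<close>

definition L2sq :: "(real \<times> real \<Rightarrow> real) \<Rightarrow> real" where
  "L2sq v = (\<Sum>\<^sub>\<infinity>e. LBINT t=0..1. (v (edge_path e t))\<^sup>2)"

definition Lpp :: "real \<Rightarrow> (real \<times> real \<Rightarrow> real) \<Rightarrow> real" where
  "Lpp p v = (\<Sum>\<^sub>\<infinity>e. LBINT t=0..1. \<bar>v (edge_path e t)\<bar> powr p)"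

definition D2sq :: "(real \<times> real \<Rightarrow> real) \<Rightarrow> real" where
  "D2sq v = (\<Sum>\<^sub>\<infinity>e. LBINT t=0..1. (deriv01 (v \<circ> edge_path e) t)\<^sup>2)"

definition H1_ladder :: "(real \<times> real \<Rightarrow> real) \<Rightarrow> bool" where
  "H1_ladder v \<longleftrightarrow>
     (\<forall>e. H1_01 (v \<circ> edge_path e)) \<and>
     (\<lambda>e. LBINT t=0..1. (v (edge_path e t))\<^sup>2) summable_on UNIV \<and>
     (\<lambda>e. LBINT t=0..1. (deriv01 (v \<circ> edge_path e) t)\<^sup>2) summable_on UNIV"

definition J_action :: "real \<Rightarrow> real \<Rightarrow> (real \<times> real \<Rightarrow> real) \<Rightarrow> real" where
  "J_action p lam v = D2sq v / 2 + lam / 2 * L2sq v - Lpp p v / p"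

definition Nehari :: "real \<Rightarrow> real \<Rightarrow> (real \<times> real \<Rightarrow> real) set" where
  "Nehari p lam = {v. H1_ladder v \<and> (\<exists>x\<in>ladder. v x \<noteq> 0) \<and>
                     D2sq v + lam * L2sq v = Lpp p v}"

definition ground_level :: "real \<Rightarrow> real \<Rightarrow> real" where
  "ground_level p lam = (INF v\<in>Nehari p lam. J_action p lam v)"

end

theory Submission
  imports Defs "HOL-Real_Asymp.Real_Asymp"
begin


lemma wd_int:
  assumes "is_weak_deriv01 f g"
  shows "g integrable_on {0..1}" "(\<lambda>t. (g t)\<^sup>2) integrable_on {0..1}"
  using assms set_borel_integral_eq_integral(1) unfolding is_weak_deriv01_def
  by blast+

lemma wd_rep:
  assumes "is_weak_deriv01 f g" "t \<in> {0..1}"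
  shows "f t = f 0 + integral {0..t} g"
proof -
  have si: "set_integrable lborel {0..1} g" using assms unfolding is_weak_deriv01_def by blast
  have t: "0 \<le> t" "t \<le> 1" using assms(2) by auto
  have "set_integrable lborel {0..t} g"
    by (rule set_integrable_subset[OF si]) (use t in auto)
  then have "(LBINT s=ereal 0..ereal t. g s) = integral {0..t} g"
    using t(1) by (rule interval_integral_eq_integral[rotated])
  then have "(LBINT s=0..t. g s) = integral {0..t} g"
    by (simp add: zero_ereal_def)
  moreover have "f t = f 0 + (LBINT s=0..t. g s)"
    using assms unfolding is_weak_deriv01_def by blast
  ultimately show ?thesis by simp
qed

lemma wd_cont:
  assumes "is_weak_deriv01 f g"
  shows "continuous_on {0..1} f"
proof -
  have "continuous_on {0..1} (\<lambda>t. f 0 + integral {0..t} g)"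
    by (intro continuous_intros indefinite_integral_continuous_1 wd_int[OF assms])
  then show ?thesis
    by (rule continuous_on_eq) (metis wd_rep[OF assms])
qed

lemma cont_LBINT:
  fixes h :: "real \<Rightarrow> real"
  assumes "continuous_on {0..1} h"
  shows "(LBINT t=0..1. h t) = integral {0..1} h"
  using interval_integral_eq_integral[of 0 1 h] borel_integrable_atLeastAtMost'[OF assms]
  by (simp add: zero_ereal_def one_ereal_def)

lemma wd_LBINT:
  assumes "is_weak_deriv01 f g"
  shows "(LBINT t=0..1. (g t)\<^sup>2) = integral {0..1} (\<lambda>t. (g t)\<^sup>2)"
proof -
  have "set_integrable lborel {0..1} (\<lambda>t. (g t)\<^sup>2)"
    using assms unfolding is_weak_deriv01_def by blast
  then show ?thesis
    using interval_integral_eq_integral[of 0 1 "\<lambda>t. (g t)\<^sup>2"]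
    by (simp add: zero_ereal_def one_ereal_def)
qed

lemma wd_scale:
  assumes "is_weak_deriv01 f g"
  shows "is_weak_deriv01 (\<lambda>t. c * f t) (\<lambda>t. c * g t)"
proof -
  have a: "set_integrable lborel {0..1} g" "set_integrable lborel {0..1} (\<lambda>t. (g t)\<^sup>2)"
    "\<forall>t\<in>{0..1}. f t = f 0 + (LBINT s=0..t. g s)"
    using assms unfolding is_weak_deriv01_def by blast+
  have "set_integrable lborel {0..1} (\<lambda>t. c * g t)"
    using a(1) by (rule set_integrable_mult_right)
  moreover have "set_integrable lborel {0..1} (\<lambda>t. (c * g t)\<^sup>2)"
    using set_integrable_mult_right[OF a(2), of "c^2"] by (simp add: power_mult_distrib)
  moreover have "\<forall>t\<in>{0..1}. c * f t = c * f 0 + (LBINT s=0..t. c * g s)"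
  proof
    fix t assume "t \<in> {0..1::real}"
    then have "f t = f 0 + (LBINT s=0..t. g s)" using a(3) by blast
    then show "c * f t = c * f 0 + (LBINT s=0..t. c * g s)" by (simp add: algebra_simps)
  qed
  ultimately show ?thesis unfolding is_weak_deriv01_def by blast
qed



lemma int_Ioi01_zero:
  fixes h :: "real \<Rightarrow> real"
  assumes hi: "h integrable_on {0..1}" and z: "\<And>t. t \<in> {0..1} \<Longrightarrow> integral {0..t} h = 0"
  shows "integral ({0..1} \<inter> {x<..}) h = 0"
proof (cases "x < 0")
  case True
  then have "{0..1} \<inter> {x<..} = {0..1}" by auto
  then show ?thesis using z[of 1] by simp
next
  case False
  show ?thesis
  proof (cases "x < 1")
    case True
    have e: "{0..1} \<inter> {x<..} = {x<..1}" using False by auto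
    have "integral {x<..1} h = integral {x..1} h"
      by (rule integral_spike_set; rule negligible_subset[of "{x}"]) auto
    also have "integral {x..1} h = integral {0..1} h - integral {0..x} h"
      using Henstock_Kurzweil_Integration.integral_combine[where a=0 and c=x and b=1 and f=h] hi False True by simp
    also have "\<dots> = 0" using z[of 1] z[of x] False True by simp
    finally show ?thesis using e by simp
  next
    case False2: False
    then have "{0..1} \<inter> {x<..} = {}" by auto
    then show ?thesis by simp
  qed
qed

lemma ae_to_negligible:
  assumes "AE x in lborel. P x"
  shows "negligible {x. \<not> P x}"
proof -
  obtain N where N: "{x \<in> space lborel. \<not> P x} \<subseteq> N" "emeasure lborel N = 0" "N \<in> sets lborel"
    using assms by (rule AE_E)
  have "N \<in> null_sets lebesgue" using N by (intro null_sets_completionI) auto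
  then have "negligible N" by (simp add: negligible_iff_null_sets)
  then show ?thesis by (rule negligible_subset) (use N in auto)
qed

lemma wd_unique_neg:
  assumes w1: "is_weak_deriv01 f g1" and w2: "is_weak_deriv01 f g2"
  shows "negligible {t \<in> {0..1}. g1 t \<noteq> g2 t}"
proof -
  define h where "h = (\<lambda>x. g1 x - g2 x)"
  have hi: "h integrable_on {0..1}" unfolding h_def
    using wd_int(1)[OF w1] wd_int(1)[OF w2] by (rule integrable_diff)
  have z: "integral {0..t} h = 0" if t: "t \<in> {0..1}" for t
  proof -
    have i1: "g1 integrable_on {0..t}" "g2 integrable_on {0..t}"
      using wd_int(1)[OF w1] wd_int(1)[OF w2] t
      by (auto intro: integrable_on_subinterval)
    have "integral {0..t} g1 = integral {0..t} g2"
      using wd_rep[OF w1 t] wd_rep[OF w2 t] by simp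
    then show ?thesis unfolding h_def using integral_diff[OF i1] by simp
  qed
  define k where "k = (\<lambda>x. indicator {0..1} x * h x)"
  have s1: "set_integrable lborel {0..1} g1" "set_integrable lborel {0..1} g2"
    using w1 w2 unfolding is_weak_deriv01_def by blast+
  have ki: "integrable lborel k"
  proof -
    have "integrable lborel (\<lambda>x. indicator {0..1} x *\<^sub>R g1 x - indicator {0..1} x *\<^sub>R g2 x)"
      using s1 unfolding set_integrable_def by (rule Bochner_Integration.integrable_diff)
    then show ?thesis unfolding k_def h_def by (simp add: algebra_simps)
  qed
  have kmeas: "k \<in> borel_measurable borel" using ki by auto
  have kx: "integral\<^sup>L lborel (\<lambda>y. indicator {x<..} y * k y) = 0" for x
  proof -
    have si: "set_integrable lborel {x<..} k" unfolding set_integrable_def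
      by (rule integrable_mult_indicator) (use ki in auto)
    have "integral\<^sup>L lborel (\<lambda>y. indicator {x<..} y * k y) = (LINT y:{x<..}|lborel. k y)"
      by (simp add: set_lebesgue_integral_def)
    also have "\<dots> = integral {x<..} k" using set_borel_integral_eq_integral(2)[OF si] .
    also have "integral {x<..} k = integral {x<..} (\<lambda>y. if y \<in> {0..1} then h y else 0)"
      by (rule integral_cong) (simp add: k_def indicator_def)
    also have "\<dots> = integral ({0..1} \<inter> {x<..}) h" by (rule integral_restrict_Int)
    also have "\<dots> = 0" by (rule int_Ioi01_zero[OF hi z])
    finally show ?thesis .
  qed
  define kp where "kp = (\<lambda>x. max 0 (k x))"
  define kn where "kn = (\<lambda>x. max 0 (- k x))"
  have kpi: "integrable lborel kp" "integrable lborel kn" unfolding kp_def kn_def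
    using ki by auto
  have dens: "density lborel (\<lambda>x. ennreal (kp x)) = density lborel (\<lambda>x. ennreal (kn x))"
  proof (rule measure_eqI_lessThan)
    show "sets (density lborel (\<lambda>x. ennreal (kp x))) = sets borel"
      "sets (density lborel (\<lambda>x. ennreal (kn x))) = sets borel" by auto
    fix x :: real
    have ip: "integrable lborel (\<lambda>y. indicator {x<..} y * kp y)"
      "integrable lborel (\<lambda>y. indicator {x<..} y * kn y)"
      using integrable_mult_indicator[of "{x<..}" lborel kp] integrable_mult_indicator[of "{x<..}" lborel kn] kpi
      by auto
    have ep: "emeasure (density lborel (\<lambda>x. ennreal (kp x))) {x<..} = ennreal (integral\<^sup>L lborel (\<lambda>y. indicator {x<..} y * kp y))"
    proof -
      have "emeasure (density lborel (\<lambda>x. ennreal (kp x))) {x<..} = (\<integral>\<^sup>+ y. ennreal (kp y) * indicator {x<..} y \<partial>lborel)"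
        using kpi by (intro emeasure_density) auto
      also have "\<dots> = (\<integral>\<^sup>+ y. ennreal (indicator {x<..} y * kp y) \<partial>lborel)"
        by (intro nn_integral_cong) (auto simp: indicator_def)
      also have "\<dots> = ennreal (integral\<^sup>L lborel (\<lambda>y. indicator {x<..} y * kp y))"
        using ip by (intro nn_integral_eq_integral) (auto simp: kp_def indicator_def)
      finally show ?thesis .
    qed
    have en: "emeasure (density lborel (\<lambda>x. ennreal (kn x))) {x<..} = ennreal (integral\<^sup>L lborel (\<lambda>y. indicator {x<..} y * kn y))"
    proof -
      have "emeasure (density lborel (\<lambda>x. ennreal (kn x))) {x<..} = (\<integral>\<^sup>+ y. ennreal (kn y) * indicator {x<..} y \<partial>lborel)"
        using kpi by (intro emeasure_density) auto
      also have "\<dots> = (\<integral>\<^sup>+ y. ennreal (indicator {x<..} y * kn y) \<partial>lborel)"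
        by (intro nn_integral_cong) (auto simp: indicator_def)
      also have "\<dots> = ennreal (integral\<^sup>L lborel (\<lambda>y. indicator {x<..} y * kn y))"
        using ip by (intro nn_integral_eq_integral) (auto simp: kn_def indicator_def)
      finally show ?thesis .
    qed
    show "emeasure (density lborel (\<lambda>x. ennreal (kp x))) {x<..} < \<infinity>"
      using ep by simp
    have "integral\<^sup>L lborel (\<lambda>y. indicator {x<..} y * kp y) - integral\<^sup>L lborel (\<lambda>y. indicator {x<..} y * kn y)
        = integral\<^sup>L lborel (\<lambda>y. indicator {x<..} y * kp y - indicator {x<..} y * kn y)"
      using ip by (rule Bochner_Integration.integral_diff[symmetric])
    also have "\<dots> = integral\<^sup>L lborel (\<lambda>y. indicator {x<..} y * k y)"
      by (rule Bochner_Integration.integral_cong) (auto simp: kp_def kn_def indicator_def max_def)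
    also have "\<dots> = 0" by (rule kx)
    finally show "emeasure (density lborel (\<lambda>x. ennreal (kp x))) {x<..} = emeasure (density lborel (\<lambda>x. ennreal (kn x))) {x<..}"
      using ep en by simp
  qed
  have "AE x in lborel. ennreal (kp x) = ennreal (kn x)"
    using kpi by (intro sigma_finite_measure.density_unique[OF sigma_finite_lborel _ _ dens]) auto
  then have "AE x in lborel. k x = 0"
    by eventually_elim (auto simp: kp_def kn_def max_def split: if_splits)
  then have "negligible {x. \<not> k x = 0}" by (rule ae_to_negligible)
  then show ?thesis by (rule negligible_subset) (auto simp: k_def h_def)
qed

lemma wd_unique_sq:
  assumes w1: "is_weak_deriv01 f g1" and w2: "is_weak_deriv01 f g2"
  shows "integral {0..1} (\<lambda>t. (g1 t)\<^sup>2) = integral {0..1} (\<lambda>t. (g2 t)\<^sup>2)"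
  by (rule integral_spike[OF wd_unique_neg[OF w1 w2]]) auto



lemma icmul: "(f::'a::euclidean_space\<Rightarrow>real) integrable_on S \<Longrightarrow> (\<lambda>x. c * f x) integrable_on S"
  using integrable_cmul[of f S c] by simp

lemma mu_trick:
  fixes x B :: real
  assumes "B \<ge> 0" "x \<ge> 0" and h: "\<And>\<mu>. \<mu> > 0 \<Longrightarrow> x \<le> (\<mu> * B + 1 / \<mu>) / 2"
  shows "x\<^sup>2 \<le> B"
proof (cases "B > 0")
  case True
  have "x \<le> (1 / sqrt B * B + 1 / (1 / sqrt B)) / 2" using True by (intro h) auto
  also have "\<dots> = sqrt B" using True
    by (simp add: field_simps)
  finally have "x \<le> sqrt B" .
  then have "x\<^sup>2 \<le> (sqrt B)\<^sup>2" using assms(2) by (intro power_mono) auto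
  then show ?thesis using True by simp
next
  case False
  then have B0: "B = 0" using assms by simp
  have "x \<le> 0"
  proof (rule ccontr)
    assume "\<not> x \<le> 0"
    then have "x > 0" by simp
    have "x \<le> (1 / x * B + 1 / (1 / x)) / 2" using \<open>x > 0\<close> by (intro h) auto
    then show False using B0 \<open>x > 0\<close> by simp
  qed
  then show ?thesis using assms B0 by simp
qed

lemma wd_diff_bound:
  assumes w: "is_weak_deriv01 f g" and st: "0 \<le> s" "s \<le> t" "t \<le> 1" and mu: "\<mu> > 0"
  shows "\<bar>f t - f s\<bar> \<le> (\<mu> * integral {0..1} (\<lambda>x. (g x)\<^sup>2) + 1 / \<mu>) / 2"
proof -
  define \<phi> where "\<phi> = (\<lambda>x. (\<mu> * (g x)\<^sup>2 + 1 / \<mu>) / 2)"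
  have gi: "g integrable_on {0..1}" and g2i: "(\<lambda>t. (g t)\<^sup>2) integrable_on {0..1}"
    using wd_int[OF w] by auto
  have phii: "\<phi> integrable_on {0..1}" unfolding \<phi>_def
    by (intro integrable_on_divide integrable_add icmul g2i integrable_const_ivl)
  have gist: "g integrable_on {s..t}" "\<phi> integrable_on {s..t}"
    using gi phii st by (auto intro: integrable_on_subinterval)
  have pw: "\<bar>g x\<bar> \<le> \<phi> x" for x
  proof -
    have e0: "(\<mu> * a - 1)\<^sup>2 / \<mu> = \<mu> * a\<^sup>2 + 1 / \<mu> - 2 * a" for a
      using mu by (simp add: power2_eq_square field_simps)
    have e: "\<mu> * (g x)\<^sup>2 + 1 / \<mu> - 2 * \<bar>g x\<bar> = (\<mu> * \<bar>g x\<bar> - 1)\<^sup>2 / \<mu>"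
      using e0[of "\<bar>g x\<bar>"] by simp
    have "0 \<le> (\<mu> * \<bar>g x\<bar> - 1)\<^sup>2 / \<mu>" using mu by simp
    then have "0 \<le> \<mu> * (g x)\<^sup>2 + 1 / \<mu> - 2 * \<bar>g x\<bar>" using e by simp
    then show ?thesis unfolding \<phi>_def by simp
  qed
  have phinn: "0 \<le> \<phi> x" for x using pw[of x] by linarith
  have "f t = f 0 + integral {0..t} g" "f s = f 0 + integral {0..s} g"
    using wd_rep[OF w, of t] wd_rep[OF w, of s] st by auto
  moreover have "integral {0..s} g + integral {s..t} g = integral {0..t} g"
  proof -
    have "g integrable_on {0..t}" using gi st by (auto intro: integrable_on_subinterval)
    then show ?thesis using st by (intro Henstock_Kurzweil_Integration.integral_combine) auto
  qed
  ultimately have ft: "f t - f s = integral {s..t} g" by simp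
  have pw1: "g x \<le> \<phi> x" and pw2: "- g x \<le> \<phi> x" for x
    using pw[of x] by (auto simp: abs_le_iff)
  have "integral {s..t} g \<le> integral {s..t} \<phi>"
    using gist(1) gist(2) pw1 by (rule integral_le)
  moreover have "- integral {s..t} g \<le> integral {s..t} \<phi>"
  proof -
    have "integral {s..t} (\<lambda>x. - g x) \<le> integral {s..t} \<phi>"
      using integrable_neg[OF gist(1)] gist(2) pw2 by (rule integral_le)
    then show ?thesis by (simp add: integral_neg)
  qed
  moreover have "integral {s..t} \<phi> \<le> integral {0..1} \<phi>"
    using st gist(2) phii phinn by (intro integral_subset_le) auto
  moreover have "integral {0..1} \<phi> = (\<mu> * integral {0..1} (\<lambda>x. (g x)\<^sup>2) + 1 / \<mu>) / 2"
    unfolding \<phi>_def using g2i by (simp only: integral_divide) (subst integral_add, auto intro: icmul simp: integral_mult_right)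
  ultimately show ?thesis using ft by (simp add: abs_le_iff)
qed

lemma wd_sobolev:
  assumes w: "is_weak_deriv01 f g" and t: "t \<in> {0..1}"
  shows "(f t)\<^sup>2 \<le> 2 * (integral {0..1} (\<lambda>s. (f s)\<^sup>2) + integral {0..1} (\<lambda>s. (g s)\<^sup>2))"
proof -
  define B where "B = integral {0..1} (\<lambda>x. (g x)\<^sup>2)"
  have B0: "B \<ge> 0" unfolding B_def using wd_int(2)[OF w] by (intro integral_nonneg) auto
  have d0: "\<bar>f t - f s\<bar>\<^sup>2 \<le> B" if s: "s \<in> {0..1}" for s
  proof (rule mu_trick[OF B0 abs_ge_zero])
    fix \<mu> :: real assume mu: "\<mu> > 0"
    show "\<bar>f t - f s\<bar> \<le> (\<mu> * B + 1 / \<mu>) / 2"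
    proof (cases "s \<le> t")
      case True then show ?thesis using wd_diff_bound[OF w _ True _ mu] s t unfolding B_def by auto
    next
      case False then show ?thesis using wd_diff_bound[OF w _ _ _ mu, of t s] s t unfolding B_def by (auto simp: abs_minus_commute)
    qed
  qed
  have d: "(f t - f s)\<^sup>2 \<le> B" if s: "s \<in> {0..1}" for s
    using d0[OF s] by simp
  have fc: "continuous_on {0..1} f" by (rule wd_cont[OF w])
  have f2i: "(\<lambda>s. (f s)\<^sup>2) integrable_on {0..1}"
    by (intro integrable_continuous_interval continuous_intros fc)
  have pw: "(f t)\<^sup>2 \<le> 2 * (f s)\<^sup>2 + 2 * B" if s: "s \<in> {0..1}" for s
  proof -
    have "(f t)\<^sup>2 \<le> 2 * (f s)\<^sup>2 + 2 * (f t - f s)\<^sup>2"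
      using zero_le_square[of "f t - 2 * f s"] by (simp add: power2_eq_square algebra_simps)
    then show ?thesis using d[OF s] by simp
  qed
  have "integral {0..1} (\<lambda>s::real. (f t)\<^sup>2) \<le> integral {0..1} (\<lambda>s. 2 * (f s)\<^sup>2 + 2 * B)"
  proof (rule Henstock_Kurzweil_Integration.integral_le)
    show "(\<lambda>s. 2 * (f s)\<^sup>2 + 2 * B) integrable_on {0..1}"
      by (intro integrable_add icmul f2i integrable_const_ivl)
  qed (use pw in auto)
  also have "\<dots> = 2 * integral {0..1} (\<lambda>s. (f s)\<^sup>2) + 2 * B"
    using f2i by (subst integral_add) (auto intro: icmul simp: integral_mult_right)
  finally show ?thesis unfolding B_def by simp
qed



lemma infsum_diff_real:
  fixes f g :: "'a \<Rightarrow> real"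
  assumes "f summable_on A" "g summable_on A"
  shows "infsum (\<lambda>x. f x - g x) A = infsum f A - infsum g A"
proof -
  have "infsum (\<lambda>x. f x + - g x) A = infsum f A + infsum (\<lambda>x. - g x) A"
    using assms by (intro infsum_add) (auto simp: summable_on_uminus)
  then show ?thesis by (simp add: infsum_uminus)
qed

lemma single_le_infsum:
  fixes f :: "'a \<Rightarrow> real"
  assumes "f summable_on UNIV" "\<And>x. f x \<ge> 0"
  shows "f e \<le> infsum f UNIV"
proof -
  have "infsum f {e} \<le> infsum f UNIV"
    using assms by (intro infsum_mono2) auto
  then show ?thesis by simp
qed

lemma H1_wd:
  assumes "H1_ladder v"
  shows "is_weak_deriv01 (v \<circ> edge_path e) (deriv01 (v \<circ> edge_path e))"
proof -
  have "H1_01 (v \<circ> edge_path e)" using assms unfolding H1_ladder_def by blast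
  then show ?thesis unfolding H1_01_def deriv01_def by (rule someI_ex)
qed

lemma H1_cont:
  assumes "H1_ladder v"
  shows "continuous_on {0..1} (\<lambda>t. v (edge_path e t))"
  using wd_cont[OF H1_wd[OF assms, of e]] by (simp add: o_def)

definition aL :: "(real \<times> real \<Rightarrow> real) \<Rightarrow> ladder_edge \<Rightarrow> real" where
  "aL v e = (LBINT t=0..1. (v (edge_path e t))\<^sup>2)"
definition bD :: "(real \<times> real \<Rightarrow> real) \<Rightarrow> ladder_edge \<Rightarrow> real" where
  "bD v e = (LBINT t=0..1. (deriv01 (v \<circ> edge_path e) t)\<^sup>2)"
definition cP :: "real \<Rightarrow> (real \<times> real \<Rightarrow> real) \<Rightarrow> ladder_edge \<Rightarrow> real" where
  "cP p v e = (LBINT t=0..1. \<bar>v (edge_path e t)\<bar> powr p)"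

lemma L2sq_aL: "L2sq v = infsum (aL v) UNIV" unfolding L2sq_def aL_def by simp
lemma D2sq_bD: "D2sq v = infsum (bD v) UNIV" unfolding D2sq_def bD_def by simp
lemma Lpp_cP: "Lpp p v = infsum (cP p v) UNIV" unfolding Lpp_def cP_def by simp

lemma H1_sum: assumes "H1_ladder v" shows "aL v summable_on UNIV" "bD v summable_on UNIV"
  using assms unfolding H1_ladder_def aL_def bD_def by auto

lemma aL_int:
  assumes "H1_ladder v"
  shows "aL v e = integral {0..1} (\<lambda>t. (v (edge_path e t))\<^sup>2)"
  unfolding aL_def by (rule cont_LBINT) (intro continuous_intros H1_cont[OF assms])

lemma bD_int:
  assumes "H1_ladder v"
  shows "bD v e = integral {0..1} (\<lambda>t. (deriv01 (v \<circ> edge_path e) t)\<^sup>2)"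
  unfolding bD_def by (rule wd_LBINT[OF H1_wd[OF assms]])

lemma cP_int:
  assumes "H1_ladder v" "p > 0"
  shows "cP p v e = integral {0..1} (\<lambda>t. \<bar>v (edge_path e t)\<bar> powr p)"
  unfolding cP_def using assms
  by (intro cont_LBINT continuous_on_powr' continuous_intros H1_cont[OF assms(1)]) auto

lemma aL_nonneg: assumes "H1_ladder v" shows "aL v e \<ge> 0"
  unfolding aL_int[OF assms]
  by (intro integral_nonneg integrable_continuous_interval continuous_intros H1_cont[OF assms]) auto

lemma bD_nonneg: assumes "H1_ladder v" shows "bD v e \<ge> 0"
  unfolding bD_int[OF assms]
  using wd_int(2)[OF H1_wd[OF assms, of e]] by (intro integral_nonneg) auto

lemma cP_nonneg: assumes "H1_ladder v" "p > 0" shows "cP p v e \<ge> 0"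
  unfolding cP_int[OF assms]
  using assms
  by (intro integral_nonneg integrable_continuous_interval continuous_on_powr' continuous_intros H1_cont[OF assms(1)]) auto

lemma L2sq_nonneg: "H1_ladder v \<Longrightarrow> L2sq v \<ge> 0"
  unfolding L2sq_aL by (intro infsum_nonneg aL_nonneg)
lemma D2sq_nonneg: "H1_ladder v \<Longrightarrow> D2sq v \<ge> 0"
  unfolding D2sq_bD by (intro infsum_nonneg bD_nonneg)

lemma sob_ladder:
  assumes v: "H1_ladder v" and t: "t \<in> {0..1}"
  shows "(v (edge_path e t))\<^sup>2 \<le> 2 * (D2sq v + L2sq v)"
proof -
  have "((v \<circ> edge_path e) t)\<^sup>2 \<le> 2 * (integral {0..1} (\<lambda>s. ((v \<circ> edge_path e) s)\<^sup>2) +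
      integral {0..1} (\<lambda>s. (deriv01 (v \<circ> edge_path e) s)\<^sup>2))"
    by (rule wd_sobolev[OF H1_wd[OF v] t])
  also have "\<dots> = 2 * (aL v e + bD v e)"
    using aL_int[OF v, of e] bD_int[OF v, of e] by (simp add: o_def)
  also have "\<dots> \<le> 2 * (L2sq v + D2sq v)"
    using single_le_infsum[OF H1_sum(1)[OF v] aL_nonneg[OF v], of e]
      single_le_infsum[OF H1_sum(2)[OF v] bD_nonneg[OF v], of e]
    unfolding L2sq_aL D2sq_bD by simp
  finally show ?thesis by (simp add: o_def add.commute)
qed

lemma ladder_pt: "x \<in> ladder \<Longrightarrow> \<exists>e t. t \<in> {0..1} \<and> x = edge_path e t"
  unfolding ladder_def by blast

lemma sob_ladder_pt:
  assumes v: "H1_ladder v" and x: "x \<in> ladder"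
  shows "(v x)\<^sup>2 \<le> 2 * (D2sq v + L2sq v)"
  using ladder_pt[OF x] sob_ladder[OF v] by auto

lemma DL_pos:
  assumes v: "H1_ladder v" and x: "x \<in> ladder" "v x \<noteq> 0"
  shows "D2sq v + L2sq v > 0"
proof -
  have "0 < (v x)\<^sup>2" using x by simp
  also have "\<dots> \<le> 2 * (D2sq v + L2sq v)" by (rule sob_ladder_pt[OF v x(1)])
  finally show ?thesis by simp
qed



lemma H1_01_wd: assumes "H1_01 f" shows "is_weak_deriv01 f (deriv01 f)"
  using assms unfolding H1_01_def deriv01_def by (rule someI_ex)

lemma scale_edge:
  assumes v: "H1_ladder v"
  shows "is_weak_deriv01 ((\<lambda>x. c * v x) \<circ> edge_path e) (\<lambda>t. c * deriv01 (v \<circ> edge_path e) t)"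
proof -
  have "is_weak_deriv01 (\<lambda>t. c * (v \<circ> edge_path e) t) (\<lambda>t. c * deriv01 (v \<circ> edge_path e) t)"
    by (rule wd_scale[OF H1_wd[OF v]])
  then show ?thesis by (simp add: o_def)
qed

lemma scale_aL: "aL (\<lambda>x. c * v x) e = c\<^sup>2 * aL v e"
  unfolding aL_def by (simp add: power_mult_distrib)

lemma scale_cP: "cP p (\<lambda>x. c * v x) e = \<bar>c\<bar> powr p * cP p v e"
  unfolding cP_def by (simp add: abs_mult powr_mult)

lemma scale_bD:
  assumes v: "H1_ladder v"
  shows "bD (\<lambda>x. c * v x) e = c\<^sup>2 * bD v e"
proof -
  let ?w = "(\<lambda>x. c * v x) \<circ> edge_path e"
  have w1: "is_weak_deriv01 ?w (\<lambda>t. c * deriv01 (v \<circ> edge_path e) t)" by (rule scale_edge[OF v])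
  then have "H1_01 ?w" unfolding H1_01_def by blast
  then have w2: "is_weak_deriv01 ?w (deriv01 ?w)" by (rule H1_01_wd)
  have "bD (\<lambda>x. c * v x) e = integral {0..1} (\<lambda>t. (deriv01 ?w t)\<^sup>2)"
    unfolding bD_def by (rule wd_LBINT[OF w2])
  also have "\<dots> = integral {0..1} (\<lambda>t. (c * deriv01 (v \<circ> edge_path e) t)\<^sup>2)"
    by (rule wd_unique_sq[OF w2 w1])
  also have "\<dots> = c\<^sup>2 * integral {0..1} (\<lambda>t. (deriv01 (v \<circ> edge_path e) t)\<^sup>2)"
    by (simp add: power_mult_distrib integral_mult_right)
  also have "\<dots> = c\<^sup>2 * bD v e" using bD_int[OF v, of e] by simp
  finally show ?thesis .
qed

lemma scale_H1:
  assumes v: "H1_ladder v"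
  shows "H1_ladder (\<lambda>x. c * v x)"
proof -
  have "H1_01 ((\<lambda>x. c * v x) \<circ> edge_path e)" for e
    using scale_edge[OF v, of c e] unfolding H1_01_def by blast
  moreover have "aL (\<lambda>x. c * v x) summable_on UNIV"
    unfolding scale_aL by (intro summable_on_cmult_right H1_sum[OF v])
  moreover have "bD (\<lambda>x. c * v x) summable_on UNIV"
    unfolding scale_bD[OF v] by (intro summable_on_cmult_right H1_sum[OF v])
  ultimately show ?thesis unfolding H1_ladder_def aL_def bD_def by blast
qed

lemma scale_L2sq: "L2sq (\<lambda>x. c * v x) = c\<^sup>2 * L2sq v"
  unfolding L2sq_aL scale_aL by (rule infsum_cmult_right')
lemma scale_D2sq: assumes v: "H1_ladder v" shows "D2sq (\<lambda>x. c * v x) = c\<^sup>2 * D2sq v"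
  unfolding D2sq_bD scale_bD[OF v] by (rule infsum_cmult_right')
lemma scale_Lpp: "Lpp p (\<lambda>x. c * v x) = \<bar>c\<bar> powr p * Lpp p v"
  unfolding Lpp_cP scale_cP by (rule infsum_cmult_right')

lemma bound_edges:
  assumes v: "H1_ladder v" and t: "t \<in> {0..1}"
  shows "\<bar>v (edge_path e t)\<bar> \<le> sqrt (2 * (D2sq v + L2sq v))"
  using sob_ladder[OF v t] real_le_rsqrt by (metis power2_abs)

lemma cP_le:
  assumes v: "H1_ladder v" and M: "M > 0" "\<And>e t. t \<in> {0..1} \<Longrightarrow> \<bar>v (edge_path e t)\<bar> \<le> M"
    and q: "q \<ge> 2"
  shows "cP q v e \<le> M powr (q - 2) * aL v e"
proof -
  have pw: "\<bar>y\<bar> powr q \<le> M powr (q - 2) * y\<^sup>2" if y: "\<bar>y\<bar> \<le> M" for y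
  proof (cases "y = 0")
    case True then show ?thesis by simp
  next
    case False
    have "\<bar>y\<bar> powr (q - 2) * \<bar>y\<bar> powr 2 = \<bar>y\<bar> powr (q - 2 + 2)"
      by (rule powr_add[symmetric])
    moreover have "\<bar>y\<bar> powr 2 = \<bar>y\<bar> ^ 2" using False by (intro powr_numeral) auto
    ultimately have e1: "\<bar>y\<bar> powr q = \<bar>y\<bar> powr (q - 2) * y\<^sup>2" by simp
    have "\<bar>y\<bar> powr (q - 2) * y\<^sup>2 \<le> M powr (q - 2) * y\<^sup>2"
      using y q by (intro mult_right_mono powr_mono2) auto
    then show ?thesis using e1 by simp
  qed
  have c1: "continuous_on {0..1} (\<lambda>t. \<bar>v (edge_path e t)\<bar> powr q)"
    using q by (intro continuous_on_powr' continuous_intros H1_cont[OF v]) auto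
  have c2: "continuous_on {0..1} (\<lambda>t. M powr (q - 2) * (v (edge_path e t))\<^sup>2)"
    by (intro continuous_intros H1_cont[OF v])
  have "cP q v e = integral {0..1} (\<lambda>t. \<bar>v (edge_path e t)\<bar> powr q)"
    using cP_int[OF v, of q] q by simp
  also have "\<dots> \<le> integral {0..1} (\<lambda>t. M powr (q - 2) * (v (edge_path e t))\<^sup>2)"
    using integrable_continuous_interval[OF c1] integrable_continuous_interval[OF c2]
    by (rule integral_le) (use pw M(2) in auto)
  also have "\<dots> = M powr (q - 2) * aL v e"
    using aL_int[OF v, of e] by (simp add: integral_mult_right)
  finally show ?thesis .
qed

lemma cP_summable:
  assumes v: "H1_ladder v" and q: "q \<ge> 2"
  shows "cP q v summable_on UNIV"
proof -
  define M where "M = sqrt (2 * (D2sq v + L2sq v)) + 1"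
  have "sqrt (2 * (D2sq v + L2sq v)) \<ge> 0" using D2sq_nonneg[OF v] L2sq_nonneg[OF v] by simp
  then have M0: "M > 0" unfolding M_def by linarith
  have Mb: "\<bar>v (edge_path e t)\<bar> \<le> M" if "t \<in> {0..1}" for e t
    using bound_edges[OF v that, of e] unfolding M_def by linarith
  show ?thesis
  proof (rule summable_on_comparison_test)
    show "(\<lambda>e. M powr (q - 2) * aL v e) summable_on UNIV"
      by (intro summable_on_cmult_right H1_sum[OF v])
    show "cP q v e \<le> M powr (q - 2) * aL v e" for e by (rule cP_le[OF v M0 Mb q])
    show "0 \<le> cP q v e" for e using q by (intro cP_nonneg[OF v]) auto
  qed
qed

lemma Lpp_compare:
  assumes v: "H1_ladder v" and M: "\<And>e t. t \<in> {0..1} \<Longrightarrow> \<bar>v (edge_path e t)\<bar> \<le> M"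
    and q: "q \<ge> 2" and r: "r \<ge> 2"
    and pw: "\<And>y. \<bar>y\<bar> \<le> M \<Longrightarrow> \<alpha> * \<bar>y\<bar> powr r - \<beta> * y\<^sup>2 \<le> \<bar>y\<bar> powr q"
  shows "\<alpha> * Lpp r v - \<beta> * L2sq v \<le> Lpp q v"
proof -
  have ce: "\<alpha> * cP r v e - \<beta> * aL v e \<le> cP q v e" for e
  proof -
    have c1: "continuous_on {0..1} (\<lambda>t. \<bar>v (edge_path e t)\<bar> powr q)"
      using q by (intro continuous_on_powr' continuous_intros H1_cont[OF v]) auto
    have c2: "continuous_on {0..1} (\<lambda>t. \<bar>v (edge_path e t)\<bar> powr r)"
      using r by (intro continuous_on_powr' continuous_intros H1_cont[OF v]) auto
    have c3: "continuous_on {0..1} (\<lambda>t. (v (edge_path e t))\<^sup>2)"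
      by (intro continuous_intros H1_cont[OF v])
    have i2: "(\<lambda>t. \<bar>v (edge_path e t)\<bar> powr r) integrable_on {0..1}"
      and i3: "(\<lambda>t. (v (edge_path e t))\<^sup>2) integrable_on {0..1}"
      using c2 c3 by (auto intro: integrable_continuous_interval)
    have "\<alpha> * cP r v e - \<beta> * aL v e =
        integral {0..1} (\<lambda>t. \<alpha> * \<bar>v (edge_path e t)\<bar> powr r - \<beta> * (v (edge_path e t))\<^sup>2)"
      using cP_int[OF v, of r] aL_int[OF v, of e] r i2 i3
      by (simp add: integral_diff icmul integral_mult_right)
    also have "\<dots> \<le> integral {0..1} (\<lambda>t. \<bar>v (edge_path e t)\<bar> powr q)"
      using integrable_diff[OF icmul[OF i2] icmul[OF i3]] integrable_continuous_interval[OF c1]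
      by (rule integral_le) (use pw M in auto)
    also have "\<dots> = cP q v e" using cP_int[OF v, of q] q by simp
    finally show ?thesis .
  qed
  have "\<alpha> * Lpp r v - \<beta> * L2sq v = infsum (\<lambda>e. \<alpha> * cP r v e - \<beta> * aL v e) UNIV"
    unfolding Lpp_cP L2sq_aL
    by (subst infsum_diff_real) (auto intro!: summable_on_cmult_right cP_summable[OF v r] H1_sum[OF v]
        simp: infsum_cmult_right')
  also have "\<dots> \<le> infsum (cP q v) UNIV"
  proof (rule infsum_mono)
    show "(\<lambda>e. \<alpha> * cP r v e - \<beta> * aL v e) summable_on UNIV"
      using summable_on_add[OF summable_on_cmult_right[OF cP_summable[OF v r]]
          summable_on_uminus[THEN iffD2, OF summable_on_cmult_right[OF H1_sum(1)[OF v]]]]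
      by simp
    show "cP q v summable_on UNIV" by (rule cP_summable[OF v q])
  qed (rule ce)
  finally show ?thesis unfolding Lpp_cP .
qed



definition Qf :: "real \<Rightarrow> (real \<times> real \<Rightarrow> real) \<Rightarrow> real" where
  "Qf lam v = D2sq v + lam * L2sq v"

lemma J_alt: "J_action p lam v = Qf lam v / 2 - Lpp p v / p"
  unfolding J_action_def Qf_def by (simp add: add_divide_distrib)

lemma Lpp_pos:
  assumes v: "H1_ladder v" and x: "x \<in> ladder" "v x \<noteq> 0" and q: "q \<ge> 2"
  shows "Lpp q v > 0"
proof -
  obtain e t where et: "t \<in> {0..1}" "x = edge_path e t" using ladder_pt[OF x(1)] by blast
  have c1: "continuous_on {0..1} (\<lambda>t. \<bar>v (edge_path e t)\<bar> powr q)"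
    using q by (intro continuous_on_powr' continuous_intros H1_cont[OF v]) auto
  have "integral {0..1} (\<lambda>t. \<bar>v (edge_path e t)\<bar> powr q) \<noteq> 0"
  proof
    assume "integral {0..1} (\<lambda>t. \<bar>v (edge_path e t)\<bar> powr q) = 0"
    then have "\<forall>s\<in>{0..1}. \<bar>v (edge_path e s)\<bar> powr q = 0"
      using integral_eq_0_iff[OF c1] by auto
    then show False using et x by auto
  qed
  moreover have "integral {0..1} (\<lambda>t. \<bar>v (edge_path e t)\<bar> powr q) \<ge> 0"
    by (intro integral_nonneg integrable_continuous_interval c1) auto
  ultimately have "cP q v e > 0" using cP_int[OF v, of q e] q by simp
  also have "cP q v e \<le> Lpp q v" unfolding Lpp_cP
    by (rule single_le_infsum[OF cP_summable[OF v q]]) (use q cP_nonneg[OF v] in auto)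
  finally show ?thesis .
qed

lemma Neh_facts:
  assumes v: "v \<in> Nehari p lam" and lam: "lam > 0"
  shows "H1_ladder v" "\<exists>x\<in>ladder. v x \<noteq> 0" "Lpp p v = Qf lam v"
    "J_action p lam v = (1/2 - 1/p) * Qf lam v" "Qf lam v > 0"
    "D2sq v + L2sq v \<le> Qf lam v / min 1 lam"
proof -
  show h: "H1_ladder v" and nz: "\<exists>x\<in>ladder. v x \<noteq> 0" and N: "Lpp p v = Qf lam v"
    using v unfolding Nehari_def Qf_def by auto
  show "J_action p lam v = (1/2 - 1/p) * Qf lam v"
    unfolding J_action_def N[symmetric] using N unfolding Qf_def by (simp add: algebra_simps add_divide_distrib)
  have DL: "D2sq v + L2sq v > 0" using nz DL_pos[OF h] by blast
  have D0: "D2sq v \<ge> 0" and L0: "L2sq v \<ge> 0" using D2sq_nonneg[OF h] L2sq_nonneg[OF h] by auto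
  have m: "min 1 lam > 0" using lam by simp
  have "min 1 lam * D2sq v \<le> 1 * D2sq v" using D0 by (intro mult_right_mono) auto
  moreover have "min 1 lam * L2sq v \<le> lam * L2sq v" using L0 by (intro mult_right_mono) auto
  ultimately have "min 1 lam * (D2sq v + L2sq v) \<le> Qf lam v"
    unfolding Qf_def by (simp add: distrib_left)
  then show "D2sq v + L2sq v \<le> Qf lam v / min 1 lam" using m by (simp add: field_simps)
  have "0 < min 1 lam * (D2sq v + L2sq v)" using m DL by simp
  then show "Qf lam v > 0" using \<open>min 1 lam * (D2sq v + L2sq v) \<le> Qf lam v\<close> by linarith
qed

lemma J_nonneg_Neh:
  assumes v: "v \<in> Nehari p lam" and lam: "lam > 0" and p: "p > 2"
  shows "J_action p lam v \<ge> 0"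
proof -
  have "1/2 - 1/p > 0" using p by (simp add: field_simps)
  then show ?thesis using Neh_facts(4,5)[OF v lam] by simp
qed

lemma bdd_J: "lam > 0 \<Longrightarrow> p > 2 \<Longrightarrow> bdd_below ((J_action p lam) ` Nehari p lam)"
  by (rule bdd_belowI[of _ 0]) (auto intro: J_nonneg_Neh)

lemma G_le: "lam > 0 \<Longrightarrow> p > 2 \<Longrightarrow> v \<in> Nehari p lam \<Longrightarrow> ground_level p lam \<le> J_action p lam v"
  unfolding ground_level_def by (rule cINF_lower[OF bdd_J])

lemma G_nonneg: "lam > 0 \<Longrightarrow> p > 2 \<Longrightarrow> Nehari p lam \<noteq> {} \<Longrightarrow> ground_level p lam \<ge> 0"
  unfolding ground_level_def by (rule cINF_greatest) (auto intro: J_nonneg_Neh)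

lemma G_approx:
  assumes "lam > 0" "p > 2" "Nehari p lam \<noteq> {}" "ground_level p lam < a"
  shows "\<exists>v\<in>Nehari p lam. J_action p lam v < a"
  using assms cINF_less_iff[OF assms(3) bdd_J[OF assms(1,2)]] unfolding ground_level_def by blast

lemma scale_into:
  assumes v: "H1_ladder v" and x: "x \<in> ladder" "v x \<noteq> 0" and q: "q > 2" and lam: "lam > 0"
  shows "\<exists>w. w \<in> Nehari q lam \<and>
    J_action q lam w = (1/2 - 1/q) * (Qf lam v / Lpp q v) powr (2 / (q - 2)) * Qf lam v"
proof -
  define t where "t = (Qf lam v / Lpp q v) powr (1 / (q - 2))"
  have N: "Lpp q v > 0" using Lpp_pos[OF v x] q by simp
  have DL: "D2sq v + L2sq v > 0" using DL_pos[OF v x] .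
  have Qp: "Qf lam v > 0"
  proof (cases "L2sq v > 0")
    case True
    then have "lam * L2sq v > 0" using lam by simp
    then show ?thesis unfolding Qf_def using D2sq_nonneg[OF v] by linarith
  next
    case False
    then have "L2sq v = 0" using L2sq_nonneg[OF v] by linarith
    then show ?thesis unfolding Qf_def using DL by simp
  qed
  have t0: "t > 0" unfolding t_def using N Qp by simp
  have t2: "t\<^sup>2 = (Qf lam v / Lpp q v) powr (2 / (q - 2))"
  proof -
    have "t\<^sup>2 = t powr 2" using t0 by (simp add: powr_numeral)
    also have "\<dots> = (Qf lam v / Lpp q v) powr (1 / (q - 2) * 2)" unfolding t_def by (rule powr_powr)
    finally show ?thesis by simp
  qed
  have tq: "t powr q = (Qf lam v / Lpp q v) * t\<^sup>2"
  proof -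
    have "t powr q = t powr (q - 2) * t powr 2" by (simp add: powr_add[symmetric])
    also have "t powr (q - 2) = Qf lam v / Lpp q v"
      unfolding t_def using N Qp q by (simp add: powr_powr)
    also have "t powr 2 = t\<^sup>2" using t0 by (simp add: powr_numeral)
    finally show ?thesis .
  qed
  let ?w = "\<lambda>y. t * v y"
  have hw: "H1_ladder ?w" by (rule scale_H1[OF v])
  have Qw: "Qf lam ?w = t\<^sup>2 * Qf lam v"
    unfolding Qf_def using scale_D2sq[OF v, of t] scale_L2sq[of t v] by (simp add: algebra_simps)
  have Nw: "Lpp q ?w = t\<^sup>2 * Qf lam v"
    using scale_Lpp[of q t v] t0 tq N by simp
  have nz: "\<exists>y\<in>ladder. ?w y \<noteq> 0" using x t0 by auto
  have eq: "D2sq ?w + lam * L2sq ?w = Lpp q ?w" using Qw Nw unfolding Qf_def by simp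
  have "?w \<in> Nehari q lam"
    unfolding Nehari_def using hw nz eq by blast
  moreover have "J_action q lam ?w = (1/2 - 1/q) * (Qf lam v / Lpp q v) powr (2 / (q - 2)) * Qf lam v"
    unfolding J_alt Qw Nw t2 by (simp add: algebra_simps)
  ultimately show ?thesis by blast
qed



lemma G_upper_from:
  assumes v: "v \<in> Nehari r lam" and lam: "lam > 0" and q: "q > 2"
    and b: "\<beta> > 0" "\<beta> * Qf lam v \<le> Lpp q v"
  shows "ground_level q lam \<le> (1/2 - 1/q) * \<beta> powr (- 2 / (q - 2)) * Qf lam v"
    "Nehari q lam \<noteq> {}"
proof -
  have h: "H1_ladder v" and nz: "\<exists>x\<in>ladder. v x \<noteq> 0" and Q: "Qf lam v > 0"
    using Neh_facts[OF v lam] by auto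
  obtain x where x: "x \<in> ladder" "v x \<noteq> 0" using nz by blast
  obtain w where w: "w \<in> Nehari q lam"
    "J_action q lam w = (1/2 - 1/q) * (Qf lam v / Lpp q v) powr (2 / (q - 2)) * Qf lam v"
    using scale_into[OF h x q lam] by blast
  show "Nehari q lam \<noteq> {}" using w by blast
  have N: "Lpp q v > 0" using b Q by (smt (verit) mult_pos_pos)
  have r1: "Qf lam v / Lpp q v \<le> 1 / \<beta>"
    using b N Q by (simp add: field_simps)
  have e0: "2 / (q - 2) \<ge> 0" using q by simp
  have "(Qf lam v / Lpp q v) powr (2 / (q - 2)) \<le> (1 / \<beta>) powr (2 / (q - 2))"
    using r1 e0 N Q by (intro powr_mono2) auto
  also have "(1 / \<beta>) powr (2 / (q - 2)) = \<beta> powr (- 2 / (q - 2))"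
    using b by (simp add: powr_divide powr_minus_divide)
  finally have pw: "(Qf lam v / Lpp q v) powr (2 / (q - 2)) \<le> \<beta> powr (- 2 / (q - 2))" .
  have cq: "1/2 - 1/q > 0" using q by (simp add: field_simps)
  have "ground_level q lam \<le> J_action q lam w" by (rule G_le[OF lam q w(1)])
  also have "\<dots> \<le> (1/2 - 1/q) * \<beta> powr (- 2 / (q - 2)) * Qf lam v"
    unfolding w(2) using pw cq Q by (intro mult_right_mono mult_left_mono) auto
  finally show "ground_level q lam \<le> (1/2 - 1/q) * \<beta> powr (- 2 / (q - 2)) * Qf lam v" .
qed

lemma G_eps:
  assumes ne: "Nehari r lam \<noteq> {}" and lam: "lam > 0" and r: "r > 2" and A: "A \<ge> 0"
    and B: "B > ground_level r lam"
    and H: "\<And>v. v \<in> Nehari r lam \<Longrightarrow> J_action r lam v < B \<Longrightarrow> G \<le> A * J_action r lam v"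
  shows "G \<le> A * ground_level r lam"
proof -
  have "G \<le> A * ground_level r lam + e" if e: "e > 0" for e
  proof -
    define \<epsilon> where "\<epsilon> = min (e / (A + 1)) (B - ground_level r lam)"
    have ep: "\<epsilon> > 0" unfolding \<epsilon>_def using e A B by simp
    obtain v where v: "v \<in> Nehari r lam" "J_action r lam v < ground_level r lam + \<epsilon>"
      using G_approx[OF lam r ne, of "ground_level r lam + \<epsilon>"] ep by auto
    have "J_action r lam v < B" using v(2) unfolding \<epsilon>_def by linarith
    then have "G \<le> A * J_action r lam v" by (rule H[OF v(1)])
    also have "\<dots> \<le> A * (ground_level r lam + \<epsilon>)" using v(2) A by (intro mult_left_mono) auto
    also have "\<dots> = A * ground_level r lam + A * \<epsilon>" by (simp add: algebra_simps)
    also have "A * \<epsilon> \<le> A * (e / (A + 1))" unfolding \<epsilon>_def using A by (intro mult_left_mono) auto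
    also have "A * (e / (A + 1)) \<le> e" using A e by (simp add: field_simps)
    finally show ?thesis by simp
  qed
  then show ?thesis by (rule field_le_epsilon)
qed

lemma pw_K1:
  fixes y :: real
  assumes Mb: "Mb > 0" "\<bar>y\<bar> \<le> Mb" and qr: "q \<le> r" "q > 0" "r > 0"
  shows "Mb powr (q - r) * \<bar>y\<bar> powr r - 0 * y\<^sup>2 \<le> \<bar>y\<bar> powr q"
proof (cases "y = 0")
  case True then show ?thesis by simp
next
  case False
  have "\<bar>y\<bar> powr (q - r) * \<bar>y\<bar> powr r = \<bar>y\<bar> powr (q - r + r)" by (rule powr_add[symmetric])
  then have e: "\<bar>y\<bar> powr q = \<bar>y\<bar> powr (q - r) * \<bar>y\<bar> powr r" by simp
  have "Mb powr (q - r) \<le> \<bar>y\<bar> powr (q - r)" using False Mb qr by (intro powr_mono2') auto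
  then have "Mb powr (q - r) * \<bar>y\<bar> powr r \<le> \<bar>y\<bar> powr (q - r) * \<bar>y\<bar> powr r"
    by (intro mult_right_mono) auto
  then show ?thesis using e by simp
qed

lemma pw_K2:
  fixes y :: real
  assumes d: "\<delta> > 0" and qr: "r \<le> q" "r > 2"
  shows "\<delta> powr (q - r) * \<bar>y\<bar> powr r - \<delta> powr (q - 2) * y\<^sup>2 \<le> \<bar>y\<bar> powr q"
proof (cases "y = 0")
  case True then show ?thesis by simp
next
  case False
  have e: "\<bar>y\<bar> powr q = \<bar>y\<bar> powr (q - r) * \<bar>y\<bar> powr r"
    using powr_add[of "\<bar>y\<bar>" "q - r" r, symmetric] by simp
  have dd: "\<delta> powr (q - 2) = \<delta> powr (q - r) * \<delta> powr (r - 2)"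
    using powr_add[of \<delta> "q - r" "r - 2", symmetric] by simp
  have ey: "\<bar>y\<bar> powr r = \<bar>y\<bar> powr (r - 2) * y\<^sup>2"
  proof -
    have "\<bar>y\<bar> powr (r - 2) * \<bar>y\<bar> powr 2 = \<bar>y\<bar> powr (r - 2 + 2)" by (rule powr_add[symmetric])
    moreover have "\<bar>y\<bar> powr 2 = \<bar>y\<bar> ^ 2" using False by (intro powr_numeral) auto
    ultimately show ?thesis by simp
  qed
  show ?thesis
  proof (cases "\<bar>y\<bar> \<ge> \<delta>")
    case True
    have "\<delta> powr (q - r) \<le> \<bar>y\<bar> powr (q - r)" using True d qr by (intro powr_mono2) auto
    then have "\<delta> powr (q - r) * \<bar>y\<bar> powr r \<le> \<bar>y\<bar> powr q"
      unfolding e by (intro mult_right_mono) auto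
    moreover have "\<delta> powr (q - 2) * y\<^sup>2 \<ge> 0" by simp
    ultimately show ?thesis by linarith
  next
    case False
    have "\<bar>y\<bar> powr (r - 2) \<le> \<delta> powr (r - 2)" using False qr by (intro powr_mono2) auto
    then have "\<bar>y\<bar> powr r \<le> \<delta> powr (r - 2) * y\<^sup>2" unfolding ey by (intro mult_right_mono) auto
    then have "\<delta> powr (q - r) * \<bar>y\<bar> powr r \<le> \<delta> powr (q - r) * (\<delta> powr (r - 2) * y\<^sup>2)"
      by (intro mult_left_mono) auto
    then have "\<delta> powr (q - r) * \<bar>y\<bar> powr r - \<delta> powr (q - 2) * y\<^sup>2 \<le> 0"
      unfolding dd by (simp add: algebra_simps)
    then show ?thesis by (smt (verit) powr_ge_zero)
  qed
qed



lemma K1: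
  assumes ne: "Nehari r lam \<noteq> {}" and lam: "lam > 0" and q: "2 < q" "q \<le> r"
    and B: "B > ground_level r lam" "B > 0"
  shows "ground_level q lam \<le> ((1/2 - 1/q) / (1/2 - 1/r)) *
      (sqrt (2 * B / ((1/2 - 1/r) * min 1 lam))) powr (2 * (r - q) / (q - 2)) * ground_level r lam"
proof -
  define Mb where "Mb = sqrt (2 * B / ((1/2 - 1/r) * min 1 lam))"
  have r: "r > 2" using q by simp
  have cr: "1/2 - 1/r > 0" using r by (simp add: field_simps)
  have cq: "1/2 - 1/q > 0" using q by (simp add: field_simps)
  have m: "min 1 lam > 0" using lam by simp
  have Mb0: "Mb > 0" unfolding Mb_def using B cr m by simp
  show ?thesis unfolding Mb_def[symmetric]
  proof (rule G_eps[OF ne lam r _ B(1)])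
    show "0 \<le> (1/2 - 1/q) / (1/2 - 1/r) * Mb powr (2 * (r - q) / (q - 2))"
      using cq cr by simp
    fix v assume v: "v \<in> Nehari r lam" and JB: "J_action r lam v < B"
    have h: "H1_ladder v" and N: "Lpp r v = Qf lam v" and J: "J_action r lam v = (1/2 - 1/r) * Qf lam v"
      and Q: "Qf lam v > 0" and DL: "D2sq v + L2sq v \<le> Qf lam v / min 1 lam"
      using Neh_facts[OF v lam] by auto
    have QB: "Qf lam v < B / (1/2 - 1/r)" using JB J cr by (simp add: field_simps mult.commute)
    have "2 * (D2sq v + L2sq v) \<le> 2 * B / ((1/2 - 1/r) * min 1 lam)"
    proof -
      have "Qf lam v / min 1 lam \<le> (B / (1/2 - 1/r)) / min 1 lam"
        using QB m by (intro divide_right_mono) auto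
      then have X: "D2sq v + L2sq v \<le> B / ((1/2 - 1/r) * min 1 lam)"
        using DL by (simp add: divide_divide_eq_left)
      show ?thesis using mult_left_mono[OF X, of 2] by simp
    qed
    then have bnd: "\<bar>v (edge_path e t)\<bar> \<le> Mb" if "t \<in> {0..1}" for e t
      using bound_edges[OF h that, of e] real_sqrt_le_mono unfolding Mb_def by (meson order_trans)
    have "Mb powr (q - r) * Lpp r v - 0 * L2sq v \<le> Lpp q v"
      by (rule Lpp_compare[OF h bnd]) (use q r pw_K1[OF Mb0] in auto)
    then have cmp: "Mb powr (q - r) * Qf lam v \<le> Lpp q v" using N by simp
    have "ground_level q lam \<le> (1/2 - 1/q) * (Mb powr (q - r)) powr (- 2 / (q - 2)) * Qf lam v"
      using G_upper_from(1)[OF v lam q(1) _ cmp] Mb0 by simp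
    also have "(Mb powr (q - r)) powr (- 2 / (q - 2)) = Mb powr (2 * (r - q) / (q - 2))"
    proof -
      have q2: "q - 2 \<noteq> 0" using q by simp
      have "(q - r) * (- 2 / (q - 2)) = 2 * (r - q) / (q - 2)" using q2 by (simp add: field_simps)
      then show ?thesis by (simp add: powr_powr)
    qed
    also have "Qf lam v = J_action r lam v / (1/2 - 1/r)"
      unfolding J using cr by (intro nonzero_mult_div_cancel_left[symmetric]) linarith
    finally show "ground_level q lam \<le> (1/2 - 1/q) / (1/2 - 1/r) * Mb powr (2 * (r - q) / (q - 2)) * J_action r lam v"
      by (simp add: field_simps)
  qed
qed

lemma K2:
  assumes ne: "Nehari r lam \<noteq> {}" and lam: "lam > 0" and r: "2 < r" "r \<le> q"
    and d: "\<delta> > 0" "\<delta> powr (r - 2) < lam"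
  shows "ground_level q lam \<le> ((1/2 - 1/q) / (1/2 - 1/r)) *
      (\<delta> powr (q - r) * (1 - \<delta> powr (r - 2) / lam)) powr (- 2 / (q - 2)) * ground_level r lam"
proof -
  define \<beta> where "\<beta> = \<delta> powr (q - r) * (1 - \<delta> powr (r - 2) / lam)"
  have q: "q > 2" using r by simp
  have cr: "1/2 - 1/r > 0" using r by (simp add: field_simps)
  have cq: "1/2 - 1/q > 0" using q by (simp add: field_simps)
  have b0: "\<beta> > 0" unfolding \<beta>_def using d lam by (simp add: field_simps)
  show ?thesis unfolding \<beta>_def[symmetric]
  proof (rule G_eps[OF ne lam r(1) _ _])
    show "0 \<le> (1/2 - 1/q) / (1/2 - 1/r) * \<beta> powr (- 2 / (q - 2))"
      using cq cr by simp
    show "ground_level r lam + 1 > ground_level r lam" by simp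
    fix v assume v: "v \<in> Nehari r lam"
    have h: "H1_ladder v" and N: "Lpp r v = Qf lam v" and J: "J_action r lam v = (1/2 - 1/r) * Qf lam v"
      and Q: "Qf lam v > 0"
      using Neh_facts[OF v lam] by auto
    have "\<delta> powr (q - r) * Lpp r v - \<delta> powr (q - 2) * L2sq v \<le> Lpp q v"
      by (rule Lpp_compare[OF h bound_edges[OF h]]) (use q r pw_K2[OF d(1)] in auto)
    moreover have "\<delta> powr (q - 2) * L2sq v \<le> \<delta> powr (q - 2) * (Qf lam v / lam)"
    proof -
      have "lam * L2sq v \<le> Qf lam v" unfolding Qf_def using D2sq_nonneg[OF h] by simp
      then have "L2sq v \<le> Qf lam v / lam" using lam by (simp add: field_simps mult.commute)
      then show ?thesis by (intro mult_left_mono) auto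
    qed
    moreover have "\<delta> powr (q - 2) = \<delta> powr (q - r) * \<delta> powr (r - 2)"
      using powr_add[of \<delta> "q - r" "r - 2", symmetric] by simp
    ultimately have cmp: "\<beta> * Qf lam v \<le> Lpp q v"
      unfolding \<beta>_def using N by (simp add: algebra_simps)
    have "ground_level q lam \<le> (1/2 - 1/q) * \<beta> powr (- 2 / (q - 2)) * Qf lam v"
      by (rule G_upper_from(1)[OF v lam q b0 cmp])
    also have "Qf lam v = J_action r lam v / (1/2 - 1/r)"
      unfolding J using cr by (intro nonzero_mult_div_cancel_left[symmetric]) linarith
    finally show "ground_level q lam \<le> (1/2 - 1/q) / (1/2 - 1/r) * \<beta> powr (- 2 / (q - 2)) * J_action r lam v"
      by (simp add: field_simps)
  qed
qed



definition v0 :: "real \<times> real \<Rightarrow> real" where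
  "v0 = (\<lambda>(x, y). if y = 0 \<and> 0 \<le> x \<and> x \<le> 1 then x * (1 - x) else 0)"

lemma v0_other:
  assumes "e \<noteq> Bot 0" "t \<in> {0..1}"
  shows "v0 (edge_path e t) = 0"
proof (cases e)
  case (Bot k)
  then have k: "k \<noteq> 0" using assms by auto
  have "k \<ge> 1 \<or> k \<le> -1" using k by linarith
  then have "real_of_int k \<ge> 1 \<or> real_of_int k \<le> -1" by (metis of_int_le_iff of_int_1 of_int_minus)
  then show ?thesis using Bot assms by (auto simp: v0_def)
next
  case (Top k) then show ?thesis by (simp add: v0_def)
next
  case (Rung k)
  show ?thesis
  proof (cases "t = 0 \<and> 0 \<le> real_of_int k \<and> real_of_int k \<le> 1")
    case True
    then have "k = 0 \<or> k = 1" by (metis of_int_0_le_iff of_int_le_1_iff antisym_conv1 int_one_le_iff_zero_less zle_diff1_eq le_less_linear not_less)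
    then show ?thesis using Rung True by (auto simp: v0_def)
  next
    case False then show ?thesis using Rung by (auto simp: v0_def)
  qed
qed

lemma wd_zero:
  assumes "\<And>t. t \<in> {0..1} \<Longrightarrow> f t = 0"
  shows "is_weak_deriv01 f (\<lambda>_. 0)"
  unfolding is_weak_deriv01_def set_integrable_def using assms by auto

lemma v0_bot:
  "is_weak_deriv01 (v0 \<circ> edge_path (Bot 0)) (\<lambda>t. 1 - 2 * t)"
proof -
  have c: "continuous_on {0..1} (\<lambda>t::real. 1 - 2 * t)" by (intro continuous_intros)
  have c2: "continuous_on {0..1} (\<lambda>t::real. (1 - 2 * t)\<^sup>2)" by (intro continuous_intros)
  have "(LBINT s=0..t. 1 - 2 * s) = (t - t\<^sup>2) - (0 - 0\<^sup>2)" if "t \<in> {0..1}" for t :: real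
  proof -
    have "(LBINT s=ereal 0..ereal t. 1 - 2 * s) = (t - t\<^sup>2) - (0 - 0\<^sup>2)"
      by (intro interval_integral_FTC_finite continuous_intros)
         (auto intro!: derivative_eq_intros simp: power2_eq_square)
    then show ?thesis by (simp add: zero_ereal_def)
  qed
  then show ?thesis unfolding is_weak_deriv01_def
    using borel_integrable_atLeastAtMost'[OF c] borel_integrable_atLeastAtMost'[OF c2]
    by (auto simp: v0_def power2_eq_square algebra_simps)
qed

lemma v0_H1_01: "H1_01 (v0 \<circ> edge_path e)"
proof (cases "e = Bot 0")
  case True then show ?thesis using v0_bot unfolding H1_01_def by blast
next
  case False then show ?thesis using wd_zero[of "v0 \<circ> edge_path e"] v0_other unfolding H1_01_def
    by fastforce
qed

lemma v0_aL: "e \<noteq> Bot 0 \<Longrightarrow> aL v0 e = 0"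
proof -
  assume e: "e \<noteq> Bot 0"
  have "aL v0 e = (LBINT t=0..1. (0::real))"
    unfolding aL_def by (rule interval_integral_cong) (use v0_other[OF e] in \<open>auto simp: einterval_iff\<close>)
  then show ?thesis by simp
qed

lemma v0_bD: "e \<noteq> Bot 0 \<Longrightarrow> bD v0 e = 0"
proof -
  assume e: "e \<noteq> Bot 0"
  have w0: "is_weak_deriv01 (v0 \<circ> edge_path e) (\<lambda>_. 0)"
    by (rule wd_zero) (use v0_other[OF e] in auto)
  have w: "is_weak_deriv01 (v0 \<circ> edge_path e) (deriv01 (v0 \<circ> edge_path e))"
    by (rule H1_01_wd[OF v0_H1_01])
  have "bD v0 e = integral {0..1} (\<lambda>t. (deriv01 (v0 \<circ> edge_path e) t)\<^sup>2)"
    unfolding bD_def by (rule wd_LBINT[OF w])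
  also have "\<dots> = integral {0..1} (\<lambda>t::real. (0::real)\<^sup>2)" by (rule wd_unique_sq[OF w w0])
  finally show ?thesis by simp
qed

lemma single_supp_summable:
  fixes f :: "ladder_edge \<Rightarrow> real"
  assumes "\<And>e. e \<noteq> a \<Longrightarrow> f e = 0"
  shows "f summable_on UNIV"
proof -
  have "f summable_on {a} \<longleftrightarrow> f summable_on UNIV"
    by (rule summable_on_cong_neutral) (use assms in auto)
  then show ?thesis by simp
qed

lemma v0_H1: "H1_ladder v0"
  unfolding H1_ladder_def
  using v0_H1_01 single_supp_summable[where f="aL v0" and a="Bot 0"] single_supp_summable[where f="bD v0" and a="Bot 0"]
    v0_aL v0_bD unfolding aL_def bD_def by blast

lemma v0_nz: "(1/2, 0) \<in> ladder" "v0 (1/2, 0) \<noteq> 0"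
proof -
  have "(1/2::real, 0::real) = edge_path (Bot 0) (1/2)" by simp
  moreover have "(1/2::real) \<in> {0..1}" by simp
  ultimately have "(1/2::real, 0::real) \<in> edge_path (Bot 0) ` {0..1}" by blast
  then show "(1/2, 0) \<in> ladder" unfolding ladder_def by blast
  show "v0 (1/2, 0) \<noteq> 0" by (simp add: v0_def)
qed

lemma Neh_ne: "q > 2 \<Longrightarrow> lam > 0 \<Longrightarrow> Nehari q lam \<noteq> {}"
proof -
  assume "q > 2" "lam > 0"
  from scale_into[OF v0_H1 v0_nz this] show ?thesis by blast
qed



lemma lim_xx_left: "((\<lambda>p::real. (pbar - p) powr (pbar - p)) \<longlongrightarrow> 1) (at_left pbar)"
  by real_asymp
lemma lim_xx_right: "((\<lambda>p::real. (p - pbar) powr (p - pbar)) \<longlongrightarrow> 1) (at_right pbar)"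
  by real_asymp

lemma left_lim:
  assumes pb: "2 < pbar" and lam: "lam > 0"
  shows "((\<lambda>p. ground_level p lam) \<longlongrightarrow> ground_level pbar lam) (at_left pbar)"
proof -
  define G where "G = (\<lambda>p. ground_level p lam)"
  define B where "B = G pbar + 1"
  define Mb where "Mb = sqrt (2 * B / ((1/2 - 1/pbar) * min 1 lam))"
  define U where "U = (\<lambda>p. ((1/2 - 1/p) / (1/2 - 1/pbar)) * Mb powr (2 * (pbar - p) / (p - 2)) * G pbar)"
  define \<beta> where "\<beta> = (\<lambda>p. (pbar - p) powr (pbar - p) * (1 - (pbar - p) powr (p - 2) / lam))"
  define R where "R = (\<lambda>p. ((1/2 - 1/pbar) / (1/2 - 1/p)) * \<beta> p powr (- 2 / (pbar - 2)))"
  have G0: "G pbar \<ge> 0" unfolding G_def using G_nonneg[OF lam pb Neh_ne[OF pb lam]] .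
  have B0: "B > 0" "B > G pbar" unfolding B_def using G0 by auto
  have cb: "1/2 - 1/pbar > 0" using pb by (simp add: field_simps)
  have Mb0: "Mb > 0" unfolding Mb_def using B0 cb lam by simp
  have ev: "eventually (\<lambda>p. 2 < p \<and> p < pbar) (at_left pbar)"
    using eventually_at_left_real[OF pb] by eventually_elim auto
  have lim_d: "((\<lambda>p. (pbar - p) powr (p - 2)) \<longlongrightarrow> 0) (at_left pbar)"
  proof (rule tendsto_zero_powrI)
    show "((\<lambda>p. pbar - p) \<longlongrightarrow> 0) (at_left pbar)"
      by (rule tendsto_eq_intros refl tendsto_ident_at | simp)+
    show "((\<lambda>p. p - 2) \<longlongrightarrow> pbar - 2) (at_left pbar)"
      by (intro tendsto_intros)
    show "\<forall>\<^sub>F x in at_left pbar. 0 \<le> pbar - x" using ev by eventually_elim auto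
  qed (use pb in auto)
  have ev2: "eventually (\<lambda>p. (pbar - p) powr (p - 2) < lam) (at_left pbar)"
    using order_tendstoD(2)[OF lim_d lam] .
  have up: "eventually (\<lambda>p. G p \<le> U p) (at_left pbar)"
    using ev
  proof eventually_elim
    case (elim p)
    show ?case unfolding G_def U_def Mb_def B_def
      using K1[OF Neh_ne[OF pb lam] lam, of p "G pbar + 1"] elim B0 unfolding G_def B_def by auto
  qed
  have lo: "eventually (\<lambda>p. G pbar \<le> R p * G p \<and> R p > 0) (at_left pbar)"
    using ev ev2
  proof eventually_elim
    case (elim p)
    have ne: "Nehari p lam \<noteq> {}" using Neh_ne[of p lam] elim lam by auto
    have "G pbar \<le> R p * G p"
      unfolding G_def R_def \<beta>_def
      by (rule K2[OF ne lam, of pbar "pbar - p"]) (use elim in auto)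
    moreover have "\<beta> p > 0" unfolding \<beta>_def using elim lam by (simp add: field_simps)
    then have "R p > 0" unfolding R_def using elim cb by (simp add: field_simps)
    ultimately show ?case by simp
  qed
  have lo': "eventually (\<lambda>p. G pbar / R p \<le> G p) (at_left pbar)"
    using lo by eventually_elim (simp add: divide_le_eq mult.commute)
  have limU: "(U \<longlongrightarrow> G pbar) (at_left pbar)"
  proof -
    have "(U \<longlongrightarrow> ((1/2 - 1/pbar) / (1/2 - 1/pbar)) * Mb powr (2 * (pbar - pbar) / (pbar - 2)) * G pbar) (at_left pbar)"
      unfolding U_def using Mb0 pb by (intro tendsto_intros) auto
    then show ?thesis using cb Mb0 pb by simp
  qed
  have limB: "(\<beta> \<longlongrightarrow> 1 * (1 - 0 / lam)) (at_left pbar)"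
    unfolding \<beta>_def using lam by (intro tendsto_intros lim_xx_left lim_d) auto
  have limR: "(R \<longlongrightarrow> ((1/2 - 1/pbar) / (1/2 - 1/pbar)) * 1 powr (- 2 / (pbar - 2))) (at_left pbar)"
    unfolding R_def using limB pb by (intro tendsto_intros) auto
  have limL: "((\<lambda>p. G pbar / R p) \<longlongrightarrow> G pbar / 1) (at_left pbar)"
    using limR cb pb by (intro tendsto_intros) auto
  have "(G \<longlongrightarrow> G pbar) (at_left pbar)"
    by (rule tendsto_sandwich[OF lo' up]) (use limL limU in auto)
  then show ?thesis unfolding G_def .
qed

lemma right_lim:
  assumes pb: "2 < pbar" and lam: "lam > 0"
  shows "((\<lambda>p. ground_level p lam) \<longlongrightarrow> ground_level pbar lam) (at_right pbar)"
proof -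
  define G where "G = (\<lambda>p. ground_level p lam)"
  define B where "B = G pbar + 1"
  define \<beta> where "\<beta> = (\<lambda>p. (p - pbar) powr (p - pbar) * (1 - (p - pbar) powr (pbar - 2) / lam))"
  define U where "U = (\<lambda>p. ((1/2 - 1/p) / (1/2 - 1/pbar)) * \<beta> p powr (- 2 / (p - 2)) * G pbar)"
  define R where "R = (\<lambda>p. ((1/2 - 1/pbar) / (1/2 - 1/p)) *
      (sqrt (2 * B / ((1/2 - 1/p) * min 1 lam))) powr (2 * (p - pbar) / (pbar - 2)))"
  have G0: "G pbar \<ge> 0" unfolding G_def using G_nonneg[OF lam pb Neh_ne[OF pb lam]] .
  have B0: "B > 0" "B > G pbar" unfolding B_def using G0 by auto
  have cb: "1/2 - 1/pbar > 0" using pb by (simp add: field_simps)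
  have ev: "eventually (\<lambda>p. pbar < p \<and> p < pbar + 1) (at_right pbar)"
  proof -
    have "pbar < pbar + 1" by simp
    from eventually_at_right_real[OF this] show ?thesis by eventually_elim auto
  qed
  have lim_d: "((\<lambda>p. (p - pbar) powr (pbar - 2)) \<longlongrightarrow> 0) (at_right pbar)"
  proof (rule tendsto_zero_powrI)
    show "((\<lambda>p. p - pbar) \<longlongrightarrow> 0) (at_right pbar)"
      by (rule tendsto_eq_intros refl tendsto_ident_at | simp)+
    show "\<forall>\<^sub>F x in at_right pbar. 0 \<le> x - pbar" using ev by eventually_elim auto
  qed (use pb in auto)
  have ev2: "eventually (\<lambda>p. (p - pbar) powr (pbar - 2) < lam) (at_right pbar)"
    using order_tendstoD(2)[OF lim_d lam] .
  have up: "eventually (\<lambda>p. G p \<le> U p) (at_right pbar)"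
    using ev ev2
  proof eventually_elim
    case (elim p)
    show ?case unfolding G_def U_def \<beta>_def
      by (rule K2[OF Neh_ne[OF pb lam] lam]) (use elim pb in auto)
  qed
  have limB: "(\<beta> \<longlongrightarrow> 1 * (1 - 0 / lam)) (at_right pbar)"
    unfolding \<beta>_def using lam by (intro tendsto_intros lim_xx_right lim_d) auto
  have limU: "(U \<longlongrightarrow> G pbar) (at_right pbar)"
  proof -
    have "(U \<longlongrightarrow> ((1/2 - 1/pbar) / (1/2 - 1/pbar)) * 1 powr (- 2 / (pbar - 2)) * G pbar) (at_right pbar)"
      unfolding U_def using limB pb by (intro tendsto_intros) auto
    then show ?thesis using cb pb by simp
  qed
  have evB: "eventually (\<lambda>p. G p < B) (at_right pbar)"
    using up order_tendstoD(2)[OF limU B0(2)] by eventually_elim auto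
  have lo: "eventually (\<lambda>p. G pbar \<le> R p * G p \<and> R p > 0) (at_right pbar)"
    using ev evB
  proof eventually_elim
    case (elim p)
    have p2: "p > 2" using elim pb by simp
    have ne: "Nehari p lam \<noteq> {}" using Neh_ne[OF p2 lam] .
    have "G pbar \<le> R p * G p"
      unfolding G_def R_def
      by (rule K1[OF ne lam]) (use elim pb B0 in \<open>auto simp: G_def\<close>)
    moreover have cp: "1/2 - 1/p > 0" using p2 by (simp add: field_simps)
    then have "sqrt (2 * B / ((1/2 - 1/p) * min 1 lam)) > 0" using B0 lam by simp
    then have "(sqrt (2 * B / ((1/2 - 1/p) * min 1 lam))) powr (2 * (p - pbar) / (pbar - 2)) > 0"
      by (simp only: powr_gt_zero)
    then have "R p > 0" unfolding R_def using cb cp by (intro mult_pos_pos divide_pos_pos)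
    ultimately show ?case by simp
  qed
  have lo': "eventually (\<lambda>p. G pbar / R p \<le> G p) (at_right pbar)"
    using lo by eventually_elim (simp add: divide_le_eq mult.commute)
  have sq0: "sqrt (2 * B / ((1/2 - 1/pbar) * min 1 lam)) > 0" using B0 cb lam by simp
  have limR: "(R \<longlongrightarrow> ((1/2 - 1/pbar) / (1/2 - 1/pbar)) *
      (sqrt (2 * B / ((1/2 - 1/pbar) * min 1 lam))) powr (2 * (pbar - pbar) / (pbar - 2))) (at_right pbar)"
    unfolding R_def using pb sq0 cb lam by (intro tendsto_intros) auto
  have limL: "((\<lambda>p. G pbar / R p) \<longlongrightarrow> G pbar / 1) (at_right pbar)"
  proof -
    have "B \<noteq> 0" "min 1 lam \<noteq> 0" using B0 lam by auto
    then have "(R \<longlongrightarrow> 1) (at_right pbar)" using limR cb pb by simp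
    then show ?thesis by (intro tendsto_intros) auto
  qed
  have "(G \<longlongrightarrow> G pbar) (at_right pbar)"
    by (rule tendsto_sandwich[OF lo' up]) (use limL limU in auto)
  then show ?thesis unfolding G_def .
qed

theorem lemma6p1:
  fixes pbar lam :: real
  assumes "2 < pbar" and "lam > 0"
  shows "((\<lambda>p. ground_level p lam) \<longlongrightarrow> ground_level pbar lam) (at pbar)"
  using left_lim[OF assms] right_lim[OF assms] by (rule filterlim_split_at)

end
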